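(* Consider the following static pricing game. There are $n$ firms $i \in N = \{1,\dots,n\}$, each with marginal cost $c_i = 0$, selling a homogeneous good. A single buyer has willingness to pay (WTP) $\omega \in \Omega = \{\omega_1,\dots,\omega_m\}$, drawn from a distribution $F$. An information structure $\langle S,\mu\rangle$ is given, where $S = \prod_{i\in N} S_i$ is a finite signal space and $\mu$ is a joint distribution on $S \times \Omega$ whose marginal on $\Omega$ is $F$; upon realization of $\omega$, the signal profile $s=(s_1,\dots,s_n)$ is drawn from $\mu(\cdot\mid\omega)$ and firm $i$ privately observes $s_i$. Each firm $i$ chooses a price $p_i(s_i) \in \mathbb{R}$ as a function of its signal. Demand for firm $i$ is $q_i = 1$ if $p_i \le \omega$ and $p_i = \min_{j\in N} p_j$, with ties among firms quoting the same lowest price resolved uniformly at random, and $q_i = 0$ otherwise; firm $i$'s payoff is $\pi_i = p_i q_i$. Suppose the action space is $\mathbb{R}$ and that $F$ and the information structure $\langle S,\mu\rangle$ are common knowledge. Then: (1) There exists a Bayesian Nash equilibrium in which every player quotes price $p^N = 0$ under every signal. Furthermore, in every Bayesian Nash equilibrium, every player receives $0$ (expected) profit. (2) In the two-player case ($n=2$), the Bayesian Nash equilibrium described in (1) (every player quoting $0$ under every signal) is the unique Bayesian Nash equilibrium. (3) In the monopoly case ($n=1$, where the single firm sells iff $p \le \omega$), the optimal pricing strategy of the firm under any signal $s$ is $p^M(s) = \arg\max_p \, p \cdot \operatorname{Prob}(\omega \ge p \mid s)$.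
   Context: A Bayesian Nash equilibrium is a profile of signal-contingent pricing strategies $(p_i : S_i \to \mathbb{R})_{i\in N}$ such that, for every firm $i$ and every signal $s_i$ received with positive probability, $p_i(s_i)$ maximizes firm $i$'s expected payoff conditional on $s_i$, given the other firms' strategies, with expectations taken under $\mu$. *)

theory Defs
  imports "HOL-Probability.Probability"
begin

text \<open>Firms are indexed by 0..n-1 (i.e. N = {..<n}). A signal profile is a function
  nat => 's (only the coordinates below n matter); an information structure is a
  finitely supported joint distribution mu on signal profiles times WTP.\<close>

definition demand :: "nat \<Rightarrow> (nat \<Rightarrow> real) \<Rightarrow> real \<Rightarrow> nat \<Rightarrow> real" where
  "demand n p \<omega> i =
     (if p i \<le> \<omega> \<and> (\<forall>j<n. p i \<le> p j)
      then 1 / real (card {j. j < n \<and> p j = p i}) else 0)"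
  \<comment> \<open>expected quantity: uniform random tie-breaking among lowest-price firms\<close>

definition payoff :: "nat \<Rightarrow> (nat \<Rightarrow> real) \<Rightarrow> real \<Rightarrow> nat \<Rightarrow> real" where
  "payoff n p \<omega> i = p i * demand n p \<omega> i"

definition sig_event :: "nat \<Rightarrow> 's \<Rightarrow> ((nat \<Rightarrow> 's) \<times> real) set" where
  "sig_event i t = {x. fst x i = t}"

definition pos_signal :: "((nat \<Rightarrow> 's) \<times> real) pmf \<Rightarrow> nat \<Rightarrow> 's \<Rightarrow> bool" where
  "pos_signal \<mu> i t \<longleftrightarrow> measure_pmf.prob \<mu> (sig_event i t) > 0"

definition interim_payoff ::
  "nat \<Rightarrow> ((nat \<Rightarrow> 's) \<times> real) pmf \<Rightarrow> (nat \<Rightarrow> 's \<Rightarrow> real) \<Rightarrow> nat \<Rightarrow> 's \<Rightarrow> real \<Rightarrow> real" where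
  "interim_payoff n \<mu> \<sigma> i t q =
     measure_pmf.expectation (cond_pmf \<mu> (sig_event i t))
       (\<lambda>(s, \<omega>). payoff n (\<lambda>j. if j = i then q else \<sigma> j (s j)) \<omega> i)"

definition BNE :: "nat \<Rightarrow> ((nat \<Rightarrow> 's) \<times> real) pmf \<Rightarrow> (nat \<Rightarrow> 's \<Rightarrow> real) \<Rightarrow> bool" where
  "BNE n \<mu> \<sigma> \<longleftrightarrow>
     (\<forall>i<n. \<forall>t. pos_signal \<mu> i t \<longrightarrow>
        (\<forall>q. interim_payoff n \<mu> \<sigma> i t q \<le> interim_payoff n \<mu> \<sigma> i t (\<sigma> i t)))"

definition exp_profit :: "nat \<Rightarrow> ((nat \<Rightarrow> 's) \<times> real) pmf \<Rightarrow> (nat \<Rightarrow> 's \<Rightarrow> real) \<Rightarrow> nat \<Rightarrow> real" where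
  "exp_profit n \<mu> \<sigma> i =
     measure_pmf.expectation \<mu> (\<lambda>(s, \<omega>). payoff n (\<lambda>j. \<sigma> j (s j)) \<omega> i)"

definition monopoly_obj :: "((nat \<Rightarrow> 's) \<times> real) pmf \<Rightarrow> 's \<Rightarrow> real \<Rightarrow> real" where
  "monopoly_obj \<mu> t p = p * measure_pmf.prob (cond_pmf \<mu> (sig_event 0 t)) {x. snd x \<ge> p}"

end

theory Submission
  imports Defs
begin

lemma exp_sum:
  fixes f :: "'a \<Rightarrow> real"
  assumes "finite (set_pmf P)"
  shows "measure_pmf.expectation P f = (\<Sum>a\<in>set_pmf P. pmf P a * f a)"
  using integral_measure_pmf[OF assms, of P f] by simp

lemma pos_signal_ex:
  assumes "pos_signal \<mu> i t"
  shows "set_pmf \<mu> \<inter> sig_event i t \<noteq> {}"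
proof
  assume "set_pmf \<mu> \<inter> sig_event i t = {}"
  then have "measure_pmf.prob \<mu> (sig_event i t) = 0"
    by (metis measure_Int_set_pmf measure_empty inf_commute)
  with assms show False unfolding pos_signal_def by simp
qed

lemma pos_signal_of:
  assumes "x \<in> set_pmf \<mu>" shows "pos_signal \<mu> i (fst x i)"
  unfolding pos_signal_def by (rule measure_pmf_posI[OF assms]) (simp add: sig_event_def)

lemma interim_sum:
  assumes fin: "finite (set_pmf \<mu>)" and ps: "pos_signal \<mu> i t"
  shows "interim_payoff n \<mu> \<sigma> i t q =
    (\<Sum>y\<in>set_pmf \<mu> \<inter> sig_event i t. pmf (cond_pmf \<mu> (sig_event i t)) y *
        payoff n (\<lambda>j. if j = i then q else \<sigma> j (fst y j)) (snd y) i)"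
proof -
  have ne: "set_pmf \<mu> \<inter> sig_event i t \<noteq> {}" by (rule pos_signal_ex[OF ps])
  have s: "set_pmf (cond_pmf \<mu> (sig_event i t)) = set_pmf \<mu> \<inter> sig_event i t"
    by (rule set_cond_pmf[OF ne])
  have fin2: "finite (set_pmf (cond_pmf \<mu> (sig_event i t)))" using s fin by simp
  show ?thesis unfolding interim_payoff_def exp_sum[OF fin2] s
    by (simp add: split_beta)
qed

lemma cond_pos:
  assumes "pos_signal \<mu> i t" "y \<in> set_pmf \<mu> \<inter> sig_event i t"
  shows "pmf (cond_pmf \<mu> (sig_event i t)) y > 0"
proof -
  have "set_pmf (cond_pmf \<mu> (sig_event i t)) = set_pmf \<mu> \<inter> sig_event i t"
    by (rule set_cond_pmf[OF pos_signal_ex[OF assms(1)]])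
  with assms(2) show ?thesis by (simp add: pmf_positive)
qed

lemma demand_nonneg: "demand n p \<omega> i \<ge> 0"
  unfolding demand_def by simp

lemma card_tie_pos:
  fixes p :: "nat \<Rightarrow> real"
  assumes "i < n" shows "card {j. j < n \<and> p j = p i} \<ge> 1"
proof -
  have "finite {j. j < n \<and> p j = p i}" by (rule finite_subset[of _ "{..<n}"]) auto
  moreover have "i \<in> {j. j < n \<and> p j = p i}" using assms by simp
  ultimately show ?thesis by (metis One_nat_def Suc_leI card_gt_0_iff empty_iff)
qed

lemma demand_le1: assumes "i < n" shows "demand n p \<omega> i \<le> 1"
  using card_tie_pos[OF assms, of p] unfolding demand_def by auto

lemma demand_pos_iff: assumes "i < n"
  shows "demand n p \<omega> i > 0 \<longleftrightarrow> (p i \<le> \<omega> \<and> (\<forall>j<n. p i \<le> p j))"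
  using card_tie_pos[OF assms, of p] unfolding demand_def by auto

lemma demand_tie: assumes "i < n" "j < n" "i \<noteq> j" "p j = p i"
  shows "demand n p \<omega> i \<le> 1/2"
proof -
  have "{i, j} \<subseteq> {l. l < n \<and> p l = p i}" using assms by auto
  then have "card {i, j} \<le> card {l. l < n \<and> p l = p i}" by (intro card_mono) auto
  then have "card {l. l < n \<and> p l = p i} \<ge> 2" using assms(3) by simp
  then show ?thesis unfolding demand_def by (auto simp: field_simps)
qed

lemma demand_alone: assumes "i < n" "p i \<le> \<omega>" "\<forall>j<n. j \<noteq> i \<longrightarrow> p i < p j"
  shows "demand n p \<omega> i = 1"
proof -
  have "{l. l < n \<and> p l = p i} = {i}" using assms by force
  then show ?thesis using assms unfolding demand_def by (auto simp: less_imp_le)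
qed

lemma payoff_nonneg: "p i \<ge> 0 \<Longrightarrow> payoff n p \<omega> i \<ge> 0"
  unfolding payoff_def using demand_nonneg by simp

lemma payoff_nonpos: "p i \<le> 0 \<Longrightarrow> payoff n p \<omega> i \<le> 0"
  unfolding payoff_def using demand_nonneg by (simp add: mult_nonpos_nonneg)

lemma payoff_nonzero: assumes "i < n" "payoff n p \<omega> i \<noteq> 0"
  shows "p i \<noteq> 0 \<and> p i \<le> \<omega> \<and> (\<forall>j<n. p i \<le> p j)"
proof -
  have "demand n p \<omega> i \<noteq> 0" "p i \<noteq> 0" using assms(2) unfolding payoff_def by auto
  then have "demand n p \<omega> i > 0" using demand_nonneg[of n p \<omega> i] by linarith
  then show ?thesis using demand_pos_iff[OF assms(1)] \<open>p i \<noteq> 0\<close> by auto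
qed

lemma sum_pos_lemma:
  fixes f w :: "'a \<Rightarrow> real"
  assumes "finite S" "\<forall>y\<in>S. f y \<ge> 0" "\<forall>y\<in>S. w y > 0" "x \<in> S" "f x > 0"
  shows "(\<Sum>y\<in>S. w y * f y) > 0"
proof -
  have "(\<Sum>y\<in>S. w y * f y) = w x * f x + (\<Sum>y\<in>S - {x}. w y * f y)"
    using assms by (simp add: sum.remove)
  moreover have "(\<Sum>y\<in>S - {x}. w y * f y) \<ge> 0"
    using assms by (intro sum_nonneg) (simp add: less_imp_le)
  moreover have "w x * f x > 0" using assms by simp
  ultimately show ?thesis by linarith
qed

lemma undercut_sum:
  fixes cur g w :: "'a \<Rightarrow> real" and dev :: "real \<Rightarrow> 'a \<Rightarrow> real" and Wp :: "'a \<Rightarrow> bool"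
  assumes fin: "finite S" and xS: "x \<in> S" and wpos: "\<forall>y\<in>S. w y > 0" and pb: "pb > 0"
    and Wx: "Wp x"
    and cur: "\<forall>y\<in>S. cur y \<le> pb * g y"
    and g: "\<forall>y\<in>S. g y \<le> (if Wp y then 1 else 0) - (if y = x then 1/2 else 0)"
    and dev: "\<forall>q. 0 < q \<longrightarrow> q < pb \<longrightarrow> (\<forall>y\<in>S. dev q y \<ge> q * (if Wp y then 1 else 0))"
  shows "\<exists>q. (\<Sum>y\<in>S. w y * cur y) < (\<Sum>y\<in>S. w y * dev q y)"
proof -
  define ind where "ind y = (if Wp y then 1 else (0::real))" for y
  define a where "a = (\<Sum>y\<in>S. w y * ind y)"
  define b where "b = w x"
  have b0: "b > 0" using wpos xS b_def by auto
  have "a \<ge> w x * ind x"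
    unfolding a_def using fin xS wpos
    by (intro member_le_sum) (auto simp: ind_def less_imp_le)
  then have ab: "a \<ge> b" using Wx by (simp add: ind_def b_def)
  have "(\<Sum>y\<in>S. w y * cur y) \<le> (\<Sum>y\<in>S. w y * (pb * g y))"
    using cur wpos by (intro sum_mono mult_left_mono) (auto simp: less_imp_le)
  also have "\<dots> = pb * (\<Sum>y\<in>S. w y * g y)"
    by (simp add: sum_distrib_left algebra_simps)
  also have "(\<Sum>y\<in>S. w y * g y) \<le> (\<Sum>y\<in>S. w y * ind y - w y * (if y = x then 1/2 else 0))"
    using g wpos by (intro sum_mono) (auto simp: ind_def right_diff_distrib[symmetric] less_imp_le intro!: mult_left_mono)
  also have "\<dots> = a - b/2"
    unfolding sum_subtractf a_def b_def using fin xS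
    by (simp add: if_distrib[of "\<lambda>z. w _ * z"] sum.delta cong: if_cong)
  finally have c1: "(\<Sum>y\<in>S. w y * cur y) \<le> pb * (a - b/2)" using pb by (simp add: mult_left_mono)
  define q where "q = pb * (a - b/4) / a"
  have a0: "a > 0" using ab b0 by linarith
  have q0: "q > 0" unfolding q_def using pb a0 ab b0 by (intro divide_pos_pos mult_pos_pos) auto
  have qpb: "q < pb" unfolding q_def using pb a0 b0 by (simp add: field_simps)
  have "(\<Sum>y\<in>S. w y * dev q y) \<ge> (\<Sum>y\<in>S. w y * (q * ind y))"
    using dev q0 qpb wpos by (intro sum_mono mult_left_mono) (auto simp: ind_def less_imp_le)
  also have "(\<Sum>y\<in>S. w y * (q * ind y)) = q * a"
    unfolding a_def by (simp add: sum_distrib_left algebra_simps)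
  also have "q * a = pb * (a - b/4)" unfolding q_def using a0 by simp
  finally have "(\<Sum>y\<in>S. w y * dev q y) \<ge> pb * (a - b/4)" .
  moreover have "pb * (a - b/4) > pb * (a - b/2)" using pb b0 by simp
  ultimately show ?thesis using c1 by (intro exI[of _ q]) linarith
qed

lemma undercut_BNE:
  fixes \<mu> :: "((nat \<Rightarrow> 's) \<times> real) pmf" and g :: "((nat \<Rightarrow> 's) \<times> real) \<Rightarrow> real"
  assumes bne: "BNE n \<mu> \<sigma>" and fin: "finite (set_pmf \<mu>)" and k: "k < n"
    and xS: "x \<in> set_pmf \<mu>" and pb: "pb > 0"
    and Wx: "(\<forall>l<n. l \<noteq> k \<longrightarrow> pb \<le> \<sigma> l (fst x l)) \<and> pb \<le> snd x"
    and cur: "\<forall>y\<in>set_pmf \<mu>. fst y k = fst x k \<longrightarrow> payoff n (\<lambda>j. \<sigma> j (fst y j)) (snd y) k \<le> pb * g y"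
    and g: "\<forall>y\<in>set_pmf \<mu>. fst y k = fst x k \<longrightarrow> g y \<le>
       (if (\<forall>l<n. l \<noteq> k \<longrightarrow> pb \<le> \<sigma> l (fst y l)) \<and> pb \<le> snd y then 1 else 0) - (if y = x then 1/2 else 0)"
  shows False
proof -
  define t where "t = fst x k"
  have ps: "pos_signal \<mu> k t" unfolding t_def by (rule pos_signal_of[OF xS])
  define S where "S = set_pmf \<mu> \<inter> sig_event k t"
  define w where "w = pmf (cond_pmf \<mu> (sig_event k t))"
  define dev where "dev q y = payoff n (\<lambda>j. if j = k then q else \<sigma> j (fst y j)) (snd y) k" for q y
  define Wp where "Wp y = ((\<forall>l<n. l \<noteq> k \<longrightarrow> pb \<le> \<sigma> l (fst y l)) \<and> pb \<le> snd y)" for y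
  have finS: "finite S" unfolding S_def using fin by simp
  have xS': "x \<in> S" unfolding S_def sig_event_def t_def using xS by simp
  have wpos: "\<forall>y\<in>S. w y > 0" unfolding w_def S_def using cond_pos[OF ps] by auto
  have curS: "\<forall>y\<in>S. dev (\<sigma> k t) y \<le> pb * g y"
  proof
    fix y assume yS: "y \<in> S"
    then have "fst y k = t" unfolding S_def sig_event_def by simp
    then have "(\<lambda>j. if j = k then \<sigma> k t else \<sigma> j (fst y j)) = (\<lambda>j. \<sigma> j (fst y j))" by auto
    then show "dev (\<sigma> k t) y \<le> pb * g y" unfolding dev_def
      using cur yS \<open>fst y k = t\<close> unfolding S_def t_def by auto
  qed
  have gS: "\<forall>y\<in>S. g y \<le> (if Wp y then 1 else 0) - (if y = x then 1/2 else 0)"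
    using g unfolding S_def Wp_def sig_event_def t_def by auto
  have devS: "\<forall>q. 0 < q \<longrightarrow> q < pb \<longrightarrow> (\<forall>y\<in>S. dev q y \<ge> q * (if Wp y then 1 else 0))"
  proof (intro allI impI ballI)
    fix q y assume q: "0 < q" "q < pb" and yS: "y \<in> S"
    show "dev q y \<ge> q * (if Wp y then 1 else 0)"
    proof (cases "Wp y")
      case True
      have "demand n (\<lambda>j. if j = k then q else \<sigma> j (fst y j)) (snd y) k = 1"
        using True q k unfolding Wp_def by (intro demand_alone) fastforce+
      then show ?thesis using True unfolding dev_def payoff_def by simp
    next
      case False
      then show ?thesis unfolding dev_def using q by (simp add: payoff_nonneg)
    qed
  qed
  obtain q where "(\<Sum>y\<in>S. w y * dev (\<sigma> k t) y) < (\<Sum>y\<in>S. w y * dev q y)"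
    using undercut_sum[OF finS xS' wpos pb _ curS gS devS] Wx unfolding Wp_def by blast
  then have "interim_payoff n \<mu> \<sigma> k t (\<sigma> k t) < interim_payoff n \<mu> \<sigma> k t q"
    unfolding interim_sum[OF fin ps] S_def w_def dev_def .
  moreover have "interim_payoff n \<mu> \<sigma> k t q \<le> interim_payoff n \<mu> \<sigma> k t (\<sigma> k t)"
    using bne k ps unfolding BNE_def by blast
  ultimately show False by linarith
qed

lemma neg_price_BNE:
  fixes \<mu> :: "((nat \<Rightarrow> 's) \<times> real) pmf"
  assumes bne: "BNE n \<mu> \<sigma>" and fin: "finite (set_pmf \<mu>)" and i: "i < n"
    and xS: "x \<in> set_pmf \<mu>" and nz: "payoff n (\<lambda>j. \<sigma> j (fst x j)) (snd x) i \<noteq> 0"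
  shows "\<sigma> i (fst x i) > 0"
proof (rule ccontr)
  assume "\<not> \<sigma> i (fst x i) > 0"
  moreover have "\<sigma> i (fst x i) \<noteq> 0" using payoff_nonzero[OF i nz] by simp
  ultimately have neg: "\<sigma> i (fst x i) < 0" by linarith
  define t where "t = fst x i"
  have ps: "pos_signal \<mu> i t" unfolding t_def by (rule pos_signal_of[OF xS])
  define S where "S = set_pmf \<mu> \<inter> sig_event i t"
  define w where "w = pmf (cond_pmf \<mu> (sig_event i t))"
  define f where "f y = - payoff n (\<lambda>j. if j = i then \<sigma> i t else \<sigma> j (fst y j)) (snd y) i" for y
  have finS: "finite S" unfolding S_def using fin by simp
  have xS': "x \<in> S" unfolding S_def sig_event_def t_def using xS by simp
  have wpos: "\<forall>y\<in>S. w y > 0" unfolding w_def S_def using cond_pos[OF ps] by auto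
  have fnn: "\<forall>y\<in>S. f y \<ge> 0" unfolding f_def using neg t_def
    by (auto intro!: payoff_nonpos[simplified] simp: less_imp_le)
  have "(\<lambda>j. if j = i then \<sigma> i t else \<sigma> j (fst x j)) = (\<lambda>j. \<sigma> j (fst x j))" unfolding t_def by auto
  then have "f x \<noteq> 0" using nz unfolding f_def by simp
  then have fx: "f x > 0" using fnn xS' by force
  have "(\<Sum>y\<in>S. w y * f y) > 0" by (rule sum_pos_lemma[OF finS fnn wpos xS' fx])
  then have "interim_payoff n \<mu> \<sigma> i t (\<sigma> i t) < 0"
    unfolding interim_sum[OF fin ps] S_def[symmetric] w_def[symmetric] f_def
    by (simp add: sum_negf)
  moreover have "interim_payoff n \<mu> \<sigma> i t 0 = 0"
    unfolding interim_sum[OF fin ps] by (simp add: payoff_def)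
  moreover have "interim_payoff n \<mu> \<sigma> i t 0 \<le> interim_payoff n \<mu> \<sigma> i t (\<sigma> i t)"
    using bne i ps unfolding BNE_def by blast
  ultimately show False by linarith
qed

lemma BNE_zero:
  fixes \<mu> :: "((nat \<Rightarrow> 's) \<times> real) pmf"
  assumes n2: "n \<ge> 2" and bne: "BNE n \<mu> \<sigma>" and fin: "finite (set_pmf \<mu>)"
  shows "\<forall>x\<in>set_pmf \<mu>. \<forall>i<n. payoff n (\<lambda>j. \<sigma> j (fst x j)) (snd x) i = 0"
proof (rule ccontr)
  define B where "B = {(x, i). x \<in> set_pmf \<mu> \<and> i < n \<and> payoff n (\<lambda>j. \<sigma> j (fst x j)) (snd x) i \<noteq> 0}"
  define pr where "pr = (\<lambda>(x :: (nat \<Rightarrow> 's) \<times> real, i). \<sigma> i (fst x i))"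
  assume "\<not> ?thesis"
  then have Bne: "B \<noteq> {}" unfolding B_def by blast
  have finB: "finite B"
    by (rule finite_subset[of _ "set_pmf \<mu> \<times> {..<n}"]) (auto simp: B_def fin)
  have "Max (pr ` B) \<in> pr ` B" using finB Bne by simp
  then obtain x i where xiB: "(x, i) \<in> B" and pbdef: "pr (x, i) = Max (pr ` B)" by auto
  have maxB: "\<forall>y l. (y, l) \<in> B \<longrightarrow> \<sigma> l (fst y l) \<le> \<sigma> i (fst x i)"
  proof (intro allI impI)
    fix y l assume "(y, l) \<in> B"
    then have "pr (y, l) \<le> Max (pr ` B)" using finB by simp
    then show "\<sigma> l (fst y l) \<le> \<sigma> i (fst x i)" using pbdef unfolding pr_def by simp
  qed
  define pb where "pb = \<sigma> i (fst x i)"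
  have xS: "x \<in> set_pmf \<mu>" and i: "i < n" and nz: "payoff n (\<lambda>j. \<sigma> j (fst x j)) (snd x) i \<noteq> 0"
    using xiB unfolding B_def by auto
  have pb0: "pb > 0" unfolding pb_def by (rule neg_price_BNE[OF bne fin i xS nz])
  have win: "pb \<le> snd x" "\<forall>j<n. pb \<le> \<sigma> j (fst x j)"
    using payoff_nonzero[OF i nz] unfolding pb_def by auto
  define j where "j = (if i = 0 then 1 else (0::nat))"
  have j: "j < n" "j \<noteq> i" unfolding j_def using n2 by auto
  show False
  proof (cases "\<sigma> j (fst x j) = pb")
    case True
    define g where "g y = demand n (\<lambda>l. \<sigma> l (fst y l)) (snd y) i" for y
    show False
    proof (rule undercut_BNE[OF bne fin i xS pb0, of g])
      show "(\<forall>l<n. l \<noteq> i \<longrightarrow> pb \<le> \<sigma> l (fst x l)) \<and> pb \<le> snd x" using win by auto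
      show "\<forall>y\<in>set_pmf \<mu>. fst y i = fst x i \<longrightarrow> payoff n (\<lambda>j. \<sigma> j (fst y j)) (snd y) i \<le> pb * g y"
        unfolding g_def payoff_def pb_def by simp
      show "\<forall>y\<in>set_pmf \<mu>. fst y i = fst x i \<longrightarrow> g y \<le>
         (if (\<forall>l<n. l \<noteq> i \<longrightarrow> pb \<le> \<sigma> l (fst y l)) \<and> pb \<le> snd y then 1 else 0) - (if y = x then 1/2 else 0)"
      proof (intro ballI impI)
        fix y assume yS: "y \<in> set_pmf \<mu>" and yt: "fst y i = fst x i"
        have gx: "g x \<le> 1/2" unfolding g_def
          by (rule demand_tie[OF i j(1) j(2)[symmetric]]) (simp add: True pb_def)
        have g1: "g y \<le> 1" unfolding g_def by (rule demand_le1[OF i])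
        have gpos: "g y > 0 \<Longrightarrow> (\<forall>l<n. l \<noteq> i \<longrightarrow> pb \<le> \<sigma> l (fst y l)) \<and> pb \<le> snd y"
          using demand_pos_iff[OF i] yt unfolding g_def pb_def by auto
        have g0: "g y \<ge> 0" unfolding g_def by (rule demand_nonneg)
        show "g y \<le> (if (\<forall>l<n. l \<noteq> i \<longrightarrow> pb \<le> \<sigma> l (fst y l)) \<and> pb \<le> snd y then 1 else 0) - (if y = x then 1/2 else 0)"
        proof (cases "y = x")
          case True
          then show ?thesis using gx win by auto
        next
          case yx: False
          show ?thesis
          proof (cases "(\<forall>l<n. l \<noteq> i \<longrightarrow> pb \<le> \<sigma> l (fst y l)) \<and> pb \<le> snd y")
            case True
            then show ?thesis using yx g1 by simp
          next
            case False
            then have "\<not> g y > 0" using gpos by blast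
            then show ?thesis using False yx g0 by simp
          qed
        qed
      qed
    qed
  next
    case False
    then have gt: "\<sigma> j (fst x j) > pb" using win j by force
    show False
    proof (rule undercut_BNE[OF bne fin j(1) xS pb0, of "\<lambda>_. 0"])
      show "(\<forall>l<n. l \<noteq> j \<longrightarrow> pb \<le> \<sigma> l (fst x l)) \<and> pb \<le> snd x" using win by auto
      show "\<forall>y\<in>set_pmf \<mu>. fst y j = fst x j \<longrightarrow> payoff n (\<lambda>j. \<sigma> j (fst y j)) (snd y) j \<le> pb * 0"
      proof (intro ballI impI)
        fix y assume yS: "y \<in> set_pmf \<mu>" and yt: "fst y j = fst x j"
        have "payoff n (\<lambda>j. \<sigma> j (fst y j)) (snd y) j = 0"
        proof (rule ccontr)
          assume "payoff n (\<lambda>j. \<sigma> j (fst y j)) (snd y) j \<noteq> 0"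
          then have "(y, j) \<in> B" unfolding B_def using yS j by auto
          then have "\<sigma> j (fst y j) \<le> pb" using maxB unfolding pb_def by blast
          then show False using gt yt by simp
        qed
        then show "payoff n (\<lambda>j. \<sigma> j (fst y j)) (snd y) j \<le> pb * 0" by simp
      qed
      show "\<forall>y\<in>set_pmf \<mu>. fst y j = fst x j \<longrightarrow> (0::real) \<le>
         (if (\<forall>l<n. l \<noteq> j \<longrightarrow> pb \<le> \<sigma> l (fst y l)) \<and> pb \<le> snd y then 1 else 0) - (if y = x then 1/2 else 0)"
        using win by auto
    qed
  qed
qed

lemma sells:
  assumes "l < n" "p l \<noteq> 0" "p l \<le> \<omega>" "\<forall>m<n. p l \<le> p m"
  shows "payoff n p \<omega> l \<noteq> 0"
  using demand_pos_iff[OF assms(1), of p \<omega>] assms unfolding payoff_def by auto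

lemma zero_BNE:
  fixes \<mu> :: "((nat \<Rightarrow> 's) \<times> real) pmf"
  assumes n2: "n \<ge> 2" and fin: "finite (set_pmf \<mu>)"
    and z: "\<forall>i<n. \<forall>t. pos_signal \<mu> i t \<longrightarrow> \<sigma> i t = 0"
  shows "BNE n \<mu> \<sigma>"
  unfolding BNE_def
proof (intro allI impI)
  fix i t q assume i: "i < n" and ps: "pos_signal \<mu> i t"
  have "\<sigma> i t = 0" using z i ps by blast
  then have cur: "interim_payoff n \<mu> \<sigma> i t (\<sigma> i t) = 0"
    unfolding interim_sum[OF fin ps] by (simp add: payoff_def)
  define j where "j = (if i = 0 then 1 else (0::nat))"
  have j: "j < n" "j \<noteq> i" unfolding j_def using n2 by auto
  have "(\<Sum>y\<in>set_pmf \<mu> \<inter> sig_event i t. pmf (cond_pmf \<mu> (sig_event i t)) y *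
        payoff n (\<lambda>j. if j = i then q else \<sigma> j (fst y j)) (snd y) i) \<le> 0"
  proof (intro sum_nonpos)
    fix y assume yS: "y \<in> set_pmf \<mu> \<inter> sig_event i t"
    have w: "pmf (cond_pmf \<mu> (sig_event i t)) y > 0" by (rule cond_pos[OF ps yS])
    have "payoff n (\<lambda>j. if j = i then q else \<sigma> j (fst y j)) (snd y) i \<le> 0"
    proof (cases "q > 0")
      case True
      have "\<sigma> j (fst y j) = 0" using z j pos_signal_of[of y \<mu> j] yS by blast
      then have "\<not> (\<forall>m<n. q \<le> (\<lambda>j. if j = i then q else \<sigma> j (fst y j)) m)"
        using j True by (metis not_le)
      then have "\<not> demand n (\<lambda>j. if j = i then q else \<sigma> j (fst y j)) (snd y) i > 0"
        using demand_pos_iff[OF i] by simp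
      then have "demand n (\<lambda>j. if j = i then q else \<sigma> j (fst y j)) (snd y) i = 0"
        using demand_nonneg[of n "\<lambda>j. if j = i then q else \<sigma> j (fst y j)" "snd y" i] by linarith
      then show ?thesis unfolding payoff_def by simp
    next
      case False
      then show ?thesis by (intro payoff_nonpos) simp
    qed
    then show "pmf (cond_pmf \<mu> (sig_event i t)) y *
        payoff n (\<lambda>j. if j = i then q else \<sigma> j (fst y j)) (snd y) i \<le> 0"
      using w by (simp add: mult_nonneg_nonpos)
  qed
  then show "interim_payoff n \<mu> \<sigma> i t q \<le> interim_payoff n \<mu> \<sigma> i t (\<sigma> i t)"
    using cur unfolding interim_sum[OF fin ps] by linarith
qed

lemma exp_profit_zero:
  fixes \<mu> :: "((nat \<Rightarrow> 's) \<times> real) pmf"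
  assumes n2: "n \<ge> 2" and bne: "BNE n \<mu> \<sigma>" and fin: "finite (set_pmf \<mu>)" and i: "i < n"
  shows "exp_profit n \<mu> \<sigma> i = 0"
  unfolding exp_profit_def exp_sum[OF fin]
  using BNE_zero[OF n2 bne fin] i by (simp add: split_beta)

lemma deviate_BNE:
  fixes \<mu> :: "((nat \<Rightarrow> 's) \<times> real) pmf"
  assumes n2: "n \<ge> 2" and bne: "BNE n \<mu> \<sigma>" and fin: "finite (set_pmf \<mu>)" and k: "k < n"
    and yS: "y \<in> set_pmf \<mu>" and q: "q > 0" "q \<le> snd y"
    and oth: "\<forall>l<n. l \<noteq> k \<longrightarrow> q < \<sigma> l (fst y l)"
  shows False
proof -
  define t where "t = fst y k"
  have ps: "pos_signal \<mu> k t" unfolding t_def by (rule pos_signal_of[OF yS])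
  define S where "S = set_pmf \<mu> \<inter> sig_event k t"
  define w where "w = pmf (cond_pmf \<mu> (sig_event k t))"
  define f where "f q z = payoff n (\<lambda>j. if j = k then q else \<sigma> j (fst z j)) (snd z) k" for q z
  have finS: "finite S" unfolding S_def using fin by simp
  have yS': "y \<in> S" unfolding S_def sig_event_def t_def using yS by simp
  have wpos: "\<forall>y\<in>S. w y > 0" unfolding w_def S_def using cond_pos[OF ps] by auto
  have "\<forall>z\<in>S. f (\<sigma> k t) z = 0"
  proof
    fix z assume zS: "z \<in> S"
    then have "fst z k = t" unfolding S_def sig_event_def by simp
    then have "(\<lambda>j. if j = k then \<sigma> k t else \<sigma> j (fst z j)) = (\<lambda>j. \<sigma> j (fst z j))" by auto
    then show "f (\<sigma> k t) z = 0" unfolding f_def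
      using BNE_zero[OF n2 bne fin] zS k unfolding S_def by auto
  qed
  then have cur: "interim_payoff n \<mu> \<sigma> k t (\<sigma> k t) = 0"
    unfolding interim_sum[OF fin ps] S_def[symmetric] w_def[symmetric] f_def[symmetric] by simp
  have fnn: "\<forall>z\<in>S. f q z \<ge> 0" unfolding f_def using q by (auto intro: payoff_nonneg)
  have "demand n (\<lambda>j. if j = k then q else \<sigma> j (fst y j)) (snd y) k = 1"
    using k q oth by (intro demand_alone) auto
  then have fy: "f q y > 0" unfolding f_def payoff_def using q by simp
  have "(\<Sum>z\<in>S. w z * f q z) > 0" by (rule sum_pos_lemma[OF finS fnn wpos yS' fy])
  then have "interim_payoff n \<mu> \<sigma> k t q > 0"
    unfolding interim_sum[OF fin ps] S_def[symmetric] w_def[symmetric] f_def .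
  moreover have "interim_payoff n \<mu> \<sigma> k t q \<le> interim_payoff n \<mu> \<sigma> k t (\<sigma> k t)"
    using bne k ps unfolding BNE_def by blast
  ultimately show False using cur by linarith
qed

lemma all2: "(i::nat) < 2 \<Longrightarrow> (\<forall>m<(2::nat). Q m) \<longleftrightarrow> (Q i \<and> Q (1 - i))"
proof -
  assume i: "i < 2"
  have "m < 2 \<Longrightarrow> m = i \<or> m = 1 - i" for m using i by linarith
  then have "(\<forall>m<2. Q m) \<longleftrightarrow> (\<forall>m\<in>{i, 1 - i}. Q m)" using i by force
  then show ?thesis by simp
qed

lemma BNE2_zero:
  fixes \<mu> :: "((nat \<Rightarrow> 's) \<times> real) pmf"
  assumes bne: "BNE 2 \<mu> \<sigma>" and fin: "finite (set_pmf \<mu>)"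
    and wtp: "\<forall>x\<in>set_pmf \<mu>. snd x > 0" and i: "i < 2" and ps: "pos_signal \<mu> i t"
  shows "\<sigma> i t = 0"
proof (rule ccontr)
  assume ne: "\<sigma> i t \<noteq> 0"
  obtain y where yS: "y \<in> set_pmf \<mu>" and yt: "fst y i = t"
    using pos_signal_ex[OF ps] unfolding sig_event_def by auto
  define j where "j = 1 - i"
  have j: "j < 2" "j \<noteq> i" "1 - j = i" unfolding j_def using i by presburger+
  define p where "p = \<sigma> i t"
  define pj where "pj = \<sigma> j (fst y j)"
  define \<omega> where "\<omega> = snd y"
  have w0: "\<omega> > 0" using wtp yS \<omega>_def by auto
  have Z: "\<forall>l<2. payoff 2 (\<lambda>j. \<sigma> j (fst y j)) (snd y) l = 0"
    using BNE_zero[OF _ bne fin] yS by auto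
  have Si: "\<not> (p \<noteq> 0 \<and> p \<le> \<omega> \<and> p \<le> pj)"
  proof
    assume h: "p \<noteq> 0 \<and> p \<le> \<omega> \<and> p \<le> pj"
    have "payoff 2 (\<lambda>j. \<sigma> j (fst y j)) (snd y) i \<noteq> 0"
      using h yt unfolding p_def pj_def \<omega>_def j_def
      by (intro sells[OF i]) (auto simp: all2[OF i])
    then show False using Z i by blast
  qed
  have Sj: "\<not> (pj \<noteq> 0 \<and> pj \<le> \<omega> \<and> pj \<le> p)"
  proof
    assume h: "pj \<noteq> 0 \<and> pj \<le> \<omega> \<and> pj \<le> p"
    have "payoff 2 (\<lambda>j. \<sigma> j (fst y j)) (snd y) j \<noteq> 0"
      using h yt j unfolding p_def pj_def \<omega>_def
      by (intro sells[OF j(1)]) (auto simp: all2[OF j(1)])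
    then show False using Z j by blast
  qed
  have Di: "\<not> (0 < q \<and> q \<le> \<omega> \<and> q < pj)" for q
  proof
    assume h: "0 < q \<and> q \<le> \<omega> \<and> q < pj"
    show False
    proof (rule deviate_BNE[OF _ bne fin i yS, of q])
      show "\<forall>l<2. l \<noteq> i \<longrightarrow> q < \<sigma> l (fst y l)"
        using h unfolding pj_def j_def by (auto simp: all2[OF i])
    qed (use h \<omega>_def in auto)
  qed
  have Dj: "\<not> (0 < q \<and> q \<le> \<omega> \<and> q < p)" for q
  proof
    assume h: "0 < q \<and> q \<le> \<omega> \<and> q < p"
    show False
    proof (rule deviate_BNE[OF _ bne fin j(1) yS, of q])
      show "\<forall>l<2. l \<noteq> j \<longrightarrow> q < \<sigma> l (fst y l)"
        using h j yt unfolding p_def by (auto simp: all2[OF j(1)])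
    qed (use h \<omega>_def in auto)
  qed
  have "p \<noteq> 0" using ne p_def by simp
  show False
  proof (cases "p < 0")
    case True
    then show False using Si Sj w0 by linarith
  next
    case False
    then have p0: "p > 0" using \<open>p \<noteq> 0\<close> by linarith
    show False
    proof (cases "pj > \<omega>")
      case True
      then show False using Di[of \<omega>] w0 by linarith
    next
      case False
      show False
      proof (cases "pj = 0")
        case True
        then show False using Dj[of "min \<omega> p / 2"] w0 p0 by (auto simp: min_def split: if_splits)
      next
        case pj0: False
        then show False using Si Sj False p0 by linarith
      qed
    qed
  qed
qed

lemma payoff1: "payoff 1 p \<omega> 0 = (if p 0 \<le> \<omega> then p 0 else 0)"
proof -
  have "{j. j < (1::nat) \<and> p j = p 0} = {0}" by auto
  then show ?thesis unfolding payoff_def demand_def by auto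
qed

lemma payoff1': "payoff (Suc 0) p \<omega> 0 = (if p 0 \<le> \<omega> then p 0 else 0)"
  using payoff1 by simp

lemma prob_sum:
  assumes "finite (set_pmf P)"
  shows "measure_pmf.prob P A = (\<Sum>a\<in>set_pmf P. pmf P a * (if a \<in> A then 1 else 0))"
proof -
  have "measure_pmf.prob P A = measure_pmf.prob P (A \<inter> set_pmf P)" by (simp add: measure_Int_set_pmf)
  also have "\<dots> = sum (pmf P) (A \<inter> set_pmf P)"
    using assms by (intro measure_measure_pmf_finite) simp
  also have "\<dots> = sum (pmf P) (set_pmf P \<inter> A)" by (simp add: Int_commute)
  also have "\<dots> = (\<Sum>a\<in>set_pmf P. if a \<in> A then pmf P a else 0)"
    using assms by (simp add: sum.inter_restrict)
  finally show ?thesis by (simp add: if_distrib cong: if_cong)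
qed

lemma interim1:
  fixes \<mu> :: "((nat \<Rightarrow> 's) \<times> real) pmf"
  assumes fin: "finite (set_pmf \<mu>)" and ps: "pos_signal \<mu> 0 t"
  shows "interim_payoff 1 \<mu> \<sigma> 0 t q = monopoly_obj \<mu> t q"
proof -
  define P where "P = cond_pmf \<mu> (sig_event 0 t)"
  have finP: "finite (set_pmf P)" unfolding P_def
    using set_cond_pmf[OF pos_signal_ex[OF ps]] fin by simp
  show ?thesis
    unfolding interim_payoff_def monopoly_obj_def P_def[symmetric] exp_sum[OF finP] prob_sum[OF finP]
    by (simp add: split_beta payoff1' sum_distrib_left algebra_simps cong: if_cong) (intro sum.cong; simp)
qed

lemma monopoly_max:
  fixes \<mu> :: "((nat \<Rightarrow> 's) \<times> real) pmf"
  assumes fin: "finite (set_pmf \<mu>)" and ps: "pos_signal \<mu> 0 t"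
  shows "\<exists>p. \<forall>q. monopoly_obj \<mu> t q \<le> monopoly_obj \<mu> t p"
proof -
  define P where "P = cond_pmf \<mu> (sig_event 0 t)"
  define Sp where "Sp = set_pmf P"
  have finP: "finite Sp" unfolding Sp_def P_def
    using set_cond_pmf[OF pos_signal_ex[OF ps]] fin by simp
  define obj where "obj q = q * measure_pmf.prob P {x. snd x \<ge> q}" for q
  have objdef: "monopoly_obj \<mu> t q = obj q" for q unfolding monopoly_obj_def obj_def P_def ..
  define C where "C = insert 0 (snd ` Sp)"
  have finC: "finite C" and neC: "C \<noteq> {}" unfolding C_def using finP by auto
  have "Max (obj ` C) \<in> obj ` C" using finC neC by simp
  then obtain p where pC: "p \<in> C" and pmax: "obj p = Max (obj ` C)" by auto
  have best: "obj c \<le> obj p" if "c \<in> C" for c using that finC pmax by simp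
  have "obj q \<le> obj p" for q
  proof (cases "q \<le> 0")
    case True
    have "obj q \<le> 0" unfolding obj_def using True by (simp add: mult_nonpos_nonneg)
    also have "0 = obj 0" unfolding obj_def by simp
    also have "\<dots> \<le> obj p" by (rule best) (simp add: C_def)
    finally show ?thesis .
  next
    case False
    define U where "U = {w\<in>snd ` Sp. q \<le> w}"
    have finU: "finite U" unfolding U_def using finP by simp
    show ?thesis
    proof (cases "U = {}")
      case True
      then have "{x. snd x \<ge> q} \<inter> set_pmf P = {}" unfolding U_def Sp_def by auto
      then have "measure_pmf.prob P {x. snd x \<ge> q} = 0" by (metis measure_Int_set_pmf measure_empty)
      then have "obj q = 0" unfolding obj_def by simp
      also have "0 = obj 0" unfolding obj_def by simp
      also have "\<dots> \<le> obj p" by (rule best) (simp add: C_def)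
      finally show ?thesis .
    next
      case Une: False
      define ws where "ws = Min U"
      have wsU: "ws \<in> U" unfolding ws_def using finU Une by simp
      have qws: "q \<le> ws" using wsU unfolding U_def by simp
      have "{x. snd x \<ge> q} \<inter> set_pmf P = {x. snd x \<ge> ws} \<inter> set_pmf P"
      proof
        show "{x. snd x \<ge> q} \<inter> set_pmf P \<subseteq> {x. snd x \<ge> ws} \<inter> set_pmf P"
        proof
          fix x assume "x \<in> {x. snd x \<ge> q} \<inter> set_pmf P"
          then have "snd x \<in> U" unfolding U_def Sp_def by auto
          then have "ws \<le> snd x" unfolding ws_def using finU by simp
          then show "x \<in> {x. snd x \<ge> ws} \<inter> set_pmf P" using \<open>x \<in> _\<close> by simp
        qed
        show "{x. snd x \<ge> ws} \<inter> set_pmf P \<subseteq> {x. snd x \<ge> q} \<inter> set_pmf P" using qws by auto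
      qed
      then have pr: "measure_pmf.prob P {x. snd x \<ge> q} = measure_pmf.prob P {x. snd x \<ge> ws}"
        by (metis measure_Int_set_pmf)
      have "obj q \<le> obj ws" unfolding obj_def pr using qws
        by (intro mult_right_mono) auto
      also have "\<dots> \<le> obj p" by (rule best) (use wsU in \<open>auto simp: C_def U_def\<close>)
      finally show ?thesis .
    qed
  qed
  then show ?thesis unfolding objdef by blast
qed

theorem proposition1:
  fixes F :: "real pmf" and \<mu> :: "((nat \<Rightarrow> 's) \<times> real) pmf"
  assumes finite_info: "finite (set_pmf \<mu>)"
    and marginal: "map_pmf snd \<mu> = F"
    and finite_Omega: "finite (set_pmf F)"
    and pos_wtp: "\<forall>\<omega>\<in>set_pmf F. \<omega> > 0"
  shows
    "(\<forall>n\<ge>2. BNE n \<mu> (\<lambda>i t. 0) \<and>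
        (\<forall>\<sigma>. BNE n \<mu> \<sigma> \<longrightarrow> (\<forall>i<n. exp_profit n \<mu> \<sigma> i = 0)))
     \<and> (\<forall>\<sigma>. BNE 2 \<mu> \<sigma> \<longleftrightarrow> (\<forall>i<2. \<forall>t. pos_signal \<mu> i t \<longrightarrow> \<sigma> i t = 0))
     \<and> (\<forall>t. pos_signal \<mu> 0 t \<longrightarrow> (\<exists>p. \<forall>q. monopoly_obj \<mu> t q \<le> monopoly_obj \<mu> t p))
     \<and> (\<forall>\<sigma>. BNE 1 \<mu> \<sigma> \<longleftrightarrow>
          (\<forall>t. pos_signal \<mu> 0 t \<longrightarrow> (\<forall>q. monopoly_obj \<mu> t q \<le> monopoly_obj \<mu> t (\<sigma> 0 t))))"
proof -
  have wtp: "\<forall>x\<in>set_pmf \<mu>. snd x > 0"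
    using pos_wtp unfolding marginal[symmetric] set_map_pmf by blast
  have P1: "\<forall>n\<ge>2. BNE n \<mu> (\<lambda>i t. 0) \<and>
        (\<forall>\<sigma>. BNE n \<mu> \<sigma> \<longrightarrow> (\<forall>i<n. exp_profit n \<mu> \<sigma> i = 0))"
  proof (rule allI, rule impI, rule conjI)
    fix n :: nat assume n2: "n \<ge> 2"
    show "BNE n \<mu> (\<lambda>i t. 0)" by (rule zero_BNE[OF n2 finite_info]) simp
    show "\<forall>\<sigma>. BNE n \<mu> \<sigma> \<longrightarrow> (\<forall>i<n. exp_profit n \<mu> \<sigma> i = 0)"
      using exp_profit_zero[OF n2 _ finite_info] by blast
  qed
  have P2: "\<forall>\<sigma>. BNE 2 \<mu> \<sigma> \<longleftrightarrow> (\<forall>i<2. \<forall>t. pos_signal \<mu> i t \<longrightarrow> \<sigma> i t = 0)"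
    using BNE2_zero[OF _ finite_info wtp] zero_BNE[OF _ finite_info, of 2] by auto
  have P3: "\<forall>t. pos_signal \<mu> 0 t \<longrightarrow> (\<exists>p. \<forall>q. monopoly_obj \<mu> t q \<le> monopoly_obj \<mu> t p)"
    using monopoly_max[OF finite_info] by blast
  have P4: "\<forall>\<sigma>. BNE 1 \<mu> \<sigma> \<longleftrightarrow>
          (\<forall>t. pos_signal \<mu> 0 t \<longrightarrow> (\<forall>q. monopoly_obj \<mu> t q \<le> monopoly_obj \<mu> t (\<sigma> 0 t)))"
    unfolding BNE_def using interim1[OF finite_info] by auto
  show ?thesis using P1 P2 P3 P4 by blast
qed

end
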